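(* Suppose that $f_1(\Delta)\geq f_1(S(1,d,n))$ holds for all $d,n$ and all $\Delta\in\mathcal{HS}(1,d,n)$. Then $f_k(\Delta)\geq f_k(S(1,d,n))$ holds for all $d,n,k$ and all $\Delta\in\mathcal{HS}(1,d,n)$.
   Context: $f_j(\Delta)$ is the number of $j$-dimensional faces of a simplicial complex $\Delta$. A $d$-dimensional simplicial complex $\Delta$ is a homology $d$-sphere if for every face $F\in\Delta$ (including $F=\emptyset$) and every $j\geq 0$, $\tilde H_j(\mathrm{lk}(F,\Delta);\mathbb{Z})\cong\tilde H_j(S^{d-|F|};\mathbb{Z})$, where $\mathrm{lk}(F,\Delta)=\{T\in\Delta:T\cap F=\emptyset, T\cup F\in\Delta\}$ and $S^m$ is the $m$-sphere. A set $F$ of vertices is a missing face of $\Delta$ if $F\notin\Delta$ but all proper subsets of $F$ lie in $\Delta$; its dimension is $|F|-1$. $\mathcal{HS}(i,d,n)$ is the family of homology $d$-spheres with $n$ vertices and no missing faces of dimension $>i$; thus $\mathcal{HS}(1,d,n)$ consists of flag homology $d$-spheres with $n$ vertices. For $n=2d+2$, $S(1,d,n)$ is the join of $d+1$ copies of the $0$-sphere $\partial\sigma^1$ (two points), i.e. the boundary of the $(d+1)$-dimensional crosspolytope; for $n>2d+2$, $S(1,d,n)$ is the join of $d-1$ copies of $\partial\sigma^1$ with the cycle on $n-2(d-1)$ vertices (equivalently, the $(d-1)$-fold suspension of an $(n-2d+2)$-gon). (Flag homology $d$-spheres have at least $2d+2$ vertices.) *)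

theory Defs
  imports "HOL-Algebra.Algebra"
begin

definition simplicial_complex :: "nat set set \<Rightarrow> bool" where
  "simplicial_complex K \<longleftrightarrow> finite K \<and> K \<noteq> {} \<and> (\<forall>F\<in>K. finite F)
     \<and> (\<forall>F\<in>K. \<forall>G. G \<subseteq> F \<longrightarrow> G \<in> K)"

definition vertices :: "nat set set \<Rightarrow> nat set" where
  "vertices K = \<Union>K"

text \<open>Number of j-dimensional faces (faces with j+1 vertices).\<close>
definition fvec :: "nat set set \<Rightarrow> nat \<Rightarrow> nat" where
  "fvec K j = card {F\<in>K. card F = j + 1}"

definition has_dim :: "nat set set \<Rightarrow> nat \<Rightarrow> bool" where
  "has_dim K d \<longleftrightarrow> (\<exists>F\<in>K. card F = d + 1) \<and> (\<forall>F\<in>K. card F \<le> d + 1)"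

definition link :: "nat set \<Rightarrow> nat set set \<Rightarrow> nat set set" where
  "link F K = {T\<in>K. T \<inter> F = {} \<and> T \<union> F \<in> K}"

definition missing_face :: "nat set set \<Rightarrow> nat set \<Rightarrow> bool" where
  "missing_face K F \<longleftrightarrow> F \<notin> K \<and> (\<forall>G. G \<subset> F \<longrightarrow> G \<in> K)"

text \<open>Chains of faces with q vertices (degree q-1; q = 0 is the empty face,
  giving the augmented complex and hence reduced homology). Orientation is induced
  by the order on nat.\<close>
definition chains :: "nat set set \<Rightarrow> nat \<Rightarrow> (nat set \<Rightarrow> int) set" where
  "chains K q = {c. \<forall>G. c G \<noteq> 0 \<longrightarrow> G \<in> K \<and> card G = q}"

definition bd :: "nat set set \<Rightarrow> (nat set \<Rightarrow> int) \<Rightarrow> (nat set \<Rightarrow> int)" where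
  "bd K c = (\<lambda>G. \<Sum>v\<in>{v. v \<notin> G \<and> insert v G \<in> K}.
                 (-1) ^ card {u\<in>G. u < v} * c (insert v G))"

definition chain_group :: "nat set set \<Rightarrow> nat \<Rightarrow> (nat set \<Rightarrow> int) monoid" where
  "chain_group K q = \<lparr>carrier = chains K q, monoid.mult = (\<lambda>a b G. a G + b G),
                      one = (\<lambda>G. 0)\<rparr>"

definition cycles :: "nat set set \<Rightarrow> nat \<Rightarrow> (nat set \<Rightarrow> int) set" where
  "cycles K q = {c \<in> chains K q. bd K c = (\<lambda>G. 0)}"

definition boundaries :: "nat set set \<Rightarrow> nat \<Rightarrow> (nat set \<Rightarrow> int) set" where
  "boundaries K q = bd K ` chains K (Suc q)"

text \<open>Reduced homology group \<open>H~_j(K;Z)\<close>, j \<ge> 0 a natural number: cycles on faces with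
  j+1 vertices modulo boundaries.\<close>
definition red_homology :: "nat set set \<Rightarrow> nat \<Rightarrow> (nat set \<Rightarrow> int) set monoid" where
  "red_homology K j =
     subgroup_generated (chain_group K (j+1)) (cycles K (j+1)) Mod boundaries K (j+1)"

text \<open>\<open>H~_j(S^m;Z)\<close> is Z for j = m and 0 otherwise (m \<ge> -1 an integer).\<close>
definition homology_like_sphere :: "(nat set \<Rightarrow> int) set monoid \<Rightarrow> nat \<Rightarrow> int \<Rightarrow> bool" where
  "homology_like_sphere H j m \<longleftrightarrow> (if int j = m then H \<cong> integer_group else trivial_group H)"

definition homology_sphere :: "nat set set \<Rightarrow> nat \<Rightarrow> bool" where
  "homology_sphere K d \<longleftrightarrow> simplicial_complex K \<and> has_dim K d \<and>
     (\<forall>F\<in>K. \<forall>j::nat. homology_like_sphere (red_homology (link F K) j) j (int d - int (card F)))"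

definition HS :: "nat \<Rightarrow> nat \<Rightarrow> nat \<Rightarrow> nat set set set" where
  "HS i d n = {K. homology_sphere K d \<and> card (vertices K) = n \<and>
                  (\<forall>F. missing_face K F \<longrightarrow> card F \<le> i + 1)}"

definition join :: "nat set set \<Rightarrow> nat set set \<Rightarrow> nat set set" where
  "join K L = {S \<union> T | S T. S \<in> K \<and> T \<in> L}"

definition zero_sphere :: "nat \<Rightarrow> nat \<Rightarrow> nat set set" where
  "zero_sphere a b = {{}, {a}, {b}}"

fun cross :: "nat \<Rightarrow> nat set set" where
  "cross 0 = {{}}"
| "cross (Suc m) = join (cross m) (zero_sphere (2*m) (2*m+1))"

text \<open>Cycle on the m vertices a, a+1, ..., a+m-1 (m \<ge> 3).\<close>
definition cycle_cx :: "nat \<Rightarrow> nat \<Rightarrow> nat set set" where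
  "cycle_cx a m = {{}} \<union> {{a+i} | i. i < m} \<union> {{a+i, a + (Suc i mod m)} | i. i < m}"

definition S1 :: "nat \<Rightarrow> nat \<Rightarrow> nat set set" where
  "S1 d n = (if n \<le> 2*d+2 then cross (d+1)
             else join (cross (d-1)) (cycle_cx (2*(d-1)) (n - 2*(d-1))))"

end

theory Submission
  imports Defs
begin


lemma gen_zero:
  assumes "carrier (chain_group K q) \<inter> S \<subseteq> {\<lambda>G. 0}"
  shows "carrier (subgroup_generated (chain_group K q) S) \<subseteq> {\<lambda>G. 0}"
proof
  fix x assume "x \<in> carrier (subgroup_generated (chain_group K q) S)"
  hence "x \<in> generate (chain_group K q) (carrier (chain_group K q) \<inter> S)"
    by (simp add: carrier_subgroup_generated)
  thus "x \<in> {\<lambda>G. 0}"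
  proof (induction rule: generate.induct)
    case one
    then show ?case by (simp add: chain_group_def)
  next
    case (incl h)
    then show ?case using assms by blast
  next
    case (inv h)
    hence h0: "h = (\<lambda>G. 0)" using assms by blast
    have "inv\<^bsub>chain_group K q\<^esub> h = (\<lambda>G. 0)"
      unfolding m_inv_def h0
    proof (rule the_equality)
      show "(\<lambda>G. 0) \<in> carrier (chain_group K q) \<and>
        (\<lambda>G. 0) \<otimes>\<^bsub>chain_group K q\<^esub> (\<lambda>G. 0::int) = \<one>\<^bsub>chain_group K q\<^esub> \<and>
        (\<lambda>G. 0) \<otimes>\<^bsub>chain_group K q\<^esub> (\<lambda>G. 0) = \<one>\<^bsub>chain_group K q\<^esub>"
        by (simp add: chain_group_def chains_def)
    next
      fix y assume "y \<in> carrier (chain_group K q) \<and>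
        (\<lambda>G. 0) \<otimes>\<^bsub>chain_group K q\<^esub> y = \<one>\<^bsub>chain_group K q\<^esub> \<and>
        y \<otimes>\<^bsub>chain_group K q\<^esub> (\<lambda>G. 0) = \<one>\<^bsub>chain_group K q\<^esub>"
      thus "y = (\<lambda>G. 0)" by (simp add: chain_group_def)
    qed
    then show ?case by simp
  next
    case (eng h1 h2)
    then show ?case by (simp add: chain_group_def)
  qed
qed

lemma not_iso_small:
  assumes "carrier Gx \<subseteq> {a}"
  shows "\<not> (Gx Mod Nx \<cong> integer_group)"
proof
  assume "Gx Mod Nx \<cong> integer_group"
  then obtain h where "h \<in> iso (Gx Mod Nx) integer_group"
    unfolding is_iso_def by blast
  hence "bij_betw h (carrier (Gx Mod Nx)) (carrier integer_group)"
    by (simp add: iso_def)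
  hence "h ` carrier (Gx Mod Nx) = UNIV" by (simp add: bij_betw_def integer_group_def)
  moreover have "carrier (Gx Mod Nx) \<subseteq> {r_coset Gx Nx a}"
    using assms by (auto simp: carrier_FactGroup)
  ultimately have "(UNIV::int set) \<subseteq> {h (r_coset Gx Nx a)}" by blast
  hence "(0::int) = h (r_coset Gx Nx a)" "(1::int) = h (r_coset Gx Nx a)" by auto
  thus False by simp
qed

lemma red_hom_not_iso:
  assumes "chains K (j+1) \<inter> cycles K (j+1) \<subseteq> {\<lambda>G. 0}"
  shows "\<not> (red_homology K j \<cong> integer_group)"
  unfolding red_homology_def
  apply (rule not_iso_small[where a="\<lambda>G. 0"])
  apply (rule gen_zero)
  using assms by (simp add: chain_group_def)




lemma sc_empty: "simplicial_complex K \<Longrightarrow> {} \<in> K"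
  unfolding simplicial_complex_def by blast

lemma sc_down: "simplicial_complex K \<Longrightarrow> F \<in> K \<Longrightarrow> G \<subseteq> F \<Longrightarrow> G \<in> K"
  unfolding simplicial_complex_def by blast

lemma sc_fin: "simplicial_complex K \<Longrightarrow> F \<in> K \<Longrightarrow> finite F"
  unfolding simplicial_complex_def by blast

lemma sc_finK: "simplicial_complex K \<Longrightarrow> finite K"
  unfolding simplicial_complex_def by blast

lemma link_single: "link {v} K = {T\<in>K. v \<notin> T \<and> insert v T \<in> K}"
  unfolding link_def by auto

lemma red_hom_triv_cx: "\<not> (red_homology {{}} j \<cong> integer_group)"
  by (rule red_hom_not_iso) (force simp: chains_def fun_eq_iff)

lemma pure:
  assumes hs: "homology_sphere K d" and F: "F \<in> K"
  shows "\<exists>G\<in>K. F \<subseteq> G \<and> card G = d+1"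
proof -
  have sc: "simplicial_complex K" and hd: "has_dim K d"
    and hom: "\<forall>F\<in>K. \<forall>j::nat. homology_like_sphere (red_homology (link F K) j) j (int d - int (card F))"
    using hs unfolding homology_sphere_def by auto
  have bnd: "\<forall>G. G \<in> K \<and> F \<subseteq> G \<longrightarrow> card G \<le> d+1" using hd unfolding has_dim_def by auto
  obtain G where G: "G \<in> K \<and> F \<subseteq> G" and Gmax: "\<forall>G'. G' \<in> K \<and> F \<subseteq> G' \<longrightarrow> card G' \<le> card G"
    using ex_has_greatest_nat[of "\<lambda>G. G \<in> K \<and> F \<subseteq> G" F card "d+2"] F bnd by fastforce
  have finG: "finite G" using sc G sc_fin by blast
  have lk: "link G K = {{}}"
  proof
    show "link G K \<subseteq> {{}}"
    proof
      fix T assume T: "T \<in> link G K"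
      hence "T \<union> G \<in> K" "T \<inter> G = {}" "T \<in> K" unfolding link_def by auto
      moreover have "finite (T \<union> G)" using sc_fin[OF sc \<open>T \<union> G \<in> K\<close>] .
      ultimately have "card (T \<union> G) \<le> card G" using Gmax G by blast
      hence "T \<union> G = G" using \<open>finite (T \<union> G)\<close> by (metis card_seteq sup_ge2)
      thus "T \<in> {{}}" using \<open>T \<inter> G = {}\<close> by blast
    qed
    show "{{}} \<subseteq> link G K" using G unfolding link_def by (auto intro: sc_empty[OF sc])
  qed
  have "card G \<le> d+1" using bnd G by blast
  moreover have "\<not> card G \<le> d"
  proof
    assume le: "card G \<le> d"
    have "homology_like_sphere (red_homology (link G K) (d - card G)) (d - card G) (int d - int (card G))"
      using hom G by blast
    hence "red_homology {{}} (d - card G) \<cong> integer_group"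
      using le lk by (simp add: homology_like_sphere_def of_nat_diff)
    thus False using red_hom_triv_cx by blast
  qed
  ultimately show ?thesis using G by auto
qed

lemma link_link:
  assumes sc: "simplicial_complex K" and G: "G \<in> link {v} K"
  shows "link G (link {v} K) = link (insert v G) K"
proof -
  have vG: "v \<notin> G" and iG: "insert v G \<in> K" using G by (auto simp: link_single)
  show ?thesis
  proof
    show "link G (link {v} K) \<subseteq> link (insert v G) K"
      by (auto simp: link_def)
  next
    show "link (insert v G) K \<subseteq> link G (link {v} K)"
    proof
      fix T assume T: "T \<in> link (insert v G) K"
      hence TK: "T \<in> K" and dis: "T \<inter> insert v G = {}" and un: "T \<union> insert v G \<in> K"
        unfolding link_def by auto
      have "insert v T \<in> K" using sc_down[OF sc un] by blast
      moreover have "T \<union> G \<in> K" using sc_down[OF sc un] by blast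
      moreover have "insert v (T \<union> G) \<in> K" using un by (metis Un_insert_right)
      ultimately show "T \<in> link G (link {v} K)" using TK dis vG
        by (auto simp: link_def)
    qed
  qed
qed

lemma link_HS:
  assumes K: "K \<in> HS 1 d n" and d: "d \<ge> 1" and v: "v \<in> vertices K"
  shows "link {v} K \<in> HS 1 (d-1) (card (vertices (link {v} K)))"
proof -
  have hs: "homology_sphere K d" and flag: "\<forall>F. missing_face K F \<longrightarrow> card F \<le> 2"
    using K unfolding HS_def by auto
  have sc: "simplicial_complex K" and hd: "has_dim K d"
    and hom: "\<forall>F\<in>K. \<forall>j::nat. homology_like_sphere (red_homology (link F K) j) j (int d - int (card F))"
    using hs unfolding homology_sphere_def by auto
  define L where "L = link {v} K"
  have vK: "{v} \<in> K" using v sc_down[OF sc] unfolding vertices_def by blast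
  have LK: "L \<subseteq> K" unfolding L_def link_def by auto
  have scL: "simplicial_complex L"
    unfolding simplicial_complex_def
  proof (intro conjI ballI allI impI)
    show "finite L" using LK sc_finK[OF sc] finite_subset by blast
    show "L \<noteq> {}" using vK sc_empty[OF sc] unfolding L_def link_single by auto
    fix F assume F: "F \<in> L"
    thus "finite F" using LK sc_fin[OF sc] by blast
    fix G assume "G \<subseteq> F"
    moreover have "F \<in> K" "v \<notin> F" "insert v F \<in> K" using F unfolding L_def link_single by auto
    ultimately have "G \<in> K" "v \<notin> G" "insert v G \<in> K"
      using sc_down[OF sc] by (blast, blast, meson insert_mono)
    thus "G \<in> L" unfolding L_def link_single by blast
  qed
  have hdL: "has_dim L (d-1)"
    unfolding has_dim_def
  proof (intro conjI ballI)
    obtain G where G: "G \<in> K" "{v} \<subseteq> G" "card G = d+1" using pure[OF hs vK] by blast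
    have "G - {v} \<in> L" unfolding L_def link_single using G sc_down[OF sc]
      by (auto simp: insert_absorb)
    moreover have "card (G - {v}) = d - 1 + 1" using G d
      by (simp add: card_Diff_singleton)
    ultimately show "\<exists>F\<in>L. card F = d - 1 + 1" by blast
  next
    fix F assume F: "F \<in> L"
    hence "insert v F \<in> K" "v \<notin> F" "finite F" unfolding L_def link_single
      using sc_fin[OF sc] by auto
    moreover have "\<forall>F\<in>K. card F \<le> d+1" using hd unfolding has_dim_def by auto
    ultimately show "card F \<le> d - 1 + 1" using d by fastforce
  qed
  have homL: "\<forall>G\<in>L. \<forall>j::nat. homology_like_sphere (red_homology (link G L) j) j (int (d-1) - int (card G))"
  proof (intro ballI allI)
    fix G j assume G: "G \<in> L"
    have iG: "insert v G \<in> K" "v \<notin> G" "finite G" using G unfolding L_def link_single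
      using sc_fin[OF sc] by auto
    have "homology_like_sphere (red_homology (link (insert v G) K) j) j (int d - int (card (insert v G)))"
      using hom iG by blast
    moreover have "int d - int (card (insert v G)) = int (d-1) - int (card G)"
      using iG d by simp
    moreover have "link G L = link (insert v G) K" using link_link[OF sc] G unfolding L_def by blast
    ultimately show "homology_like_sphere (red_homology (link G L) j) j (int (d-1) - int (card G))"
      by simp
  qed
  have flagL: "\<forall>F. missing_face L F \<longrightarrow> card F \<le> 1 + 1"
  proof (intro allI impI)
    fix F assume mf: "missing_face L F"
    hence FL: "F \<notin> L" and sub: "\<forall>G. G \<subset> F \<longrightarrow> G \<in> L" unfolding missing_face_def by auto
    show "card F \<le> 1 + 1"
    proof (rule ccontr)
      assume c: "\<not> card F \<le> 1 + 1"
      hence finF: "finite F" using card.infinite by force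
      have vF: "v \<notin> F"
      proof
        assume "v \<in> F"
        moreover have "{v} \<subset> F" using c \<open>v \<in> F\<close> by auto
        ultimately show False using sub unfolding L_def link_single by auto
      qed
      show False
      proof (cases "F \<in> K")
        case True
        hence niK: "insert v F \<notin> K" using FL vF unfolding L_def link_single by auto
        have "missing_face K (insert v F)"
          unfolding missing_face_def
        proof (intro conjI allI impI)
          show "insert v F \<notin> K" by fact
          fix G assume G: "G \<subset> insert v F"
          show "G \<in> K"
          proof (cases "v \<in> G")
            case True
            have "G - {v} \<subset> F" using G True vF by blast
            hence "G - {v} \<in> L" using sub by blast
            hence "insert v (G - {v}) \<in> K" unfolding L_def link_single by auto
            thus ?thesis using True by (simp add: insert_absorb)
          next
            case False
            hence "G \<subseteq> F" using G by blast
            thus ?thesis using sc_down[OF sc True] by blast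
          qed
        qed
        hence "card (insert v F) \<le> 2" using flag by blast
        thus False using c finF vF by simp
      next
        case False
        have "missing_face K F" unfolding missing_face_def using False sub LK by blast
        hence "card F \<le> 2" using flag by blast
        thus False using c by simp
      qed
    qed
  qed
  show ?thesis unfolding HS_def homology_sphere_def
    using scL hdL homL flagL unfolding L_def by blast
qed




definition gc :: "nat set set \<Rightarrow> nat \<Rightarrow> nat" where
  "gc K m = card {F\<in>K. card F = m}"

lemma fvec_gc: "fvec K j = gc K (Suc j)"
  by (simp add: fvec_def gc_def)

lemma gc_one: assumes sc: "simplicial_complex K" shows "gc K 1 = card (vertices K)"
proof -
  have "{F\<in>K. card F = 1} = (\<lambda>x. {x}) ` vertices K"
    unfolding vertices_def using sc_down[OF sc]
    by (auto simp: card_1_singleton_iff)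
  thus ?thesis unfolding gc_def by (simp add: card_image)
qed

lemma gc_link:
  assumes sc: "simplicial_complex K"
  shows "gc (link {v} K) m = card {F\<in>K. v \<in> F \<and> card F = Suc m}"
proof -
  have "{F\<in>K. v \<in> F \<and> card F = Suc m} = insert v ` {T \<in> link {v} K. card T = m}"
  proof
    show "insert v ` {T \<in> link {v} K. card T = m} \<subseteq> {F\<in>K. v \<in> F \<and> card F = Suc m}"
      using sc_fin[OF sc] by (auto simp: link_single)
  next
    show "{F\<in>K. v \<in> F \<and> card F = Suc m} \<subseteq> insert v ` {T \<in> link {v} K. card T = m}"
    proof
      fix F assume F: "F \<in> {F\<in>K. v \<in> F \<and> card F = Suc m}"
      hence "F - {v} \<in> {T \<in> link {v} K. card T = m}" using sc_down[OF sc] sc_fin[OF sc]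
        by (auto simp: link_single insert_absorb)
      moreover have "F = insert v (F - {v})" using F by auto
      ultimately show "F \<in> insert v ` {T \<in> link {v} K. card T = m}" by blast
    qed
  qed
  moreover have "inj_on (insert v) {T \<in> link {v} K. card T = m}"
    by (auto simp: inj_on_def link_single)
  ultimately show ?thesis unfolding gc_def by (simp add: card_image)
qed

lemma double_count:
  assumes sc: "simplicial_complex K"
  shows "(\<Sum>v\<in>vertices K. gc (link {v} K) m) = Suc m * gc K (Suc m)"
proof -
  have "(\<Sum>v\<in>vertices K. gc (link {v} K) m) =
        (\<Sum>v\<in>vertices K. card {F\<in>{F\<in>K. card F = Suc m}. v \<in> F})"
    by (rule sum.cong) (auto simp: gc_link[OF sc] intro: arg_cong[where f=card])
  also have "\<dots> = Suc m * card {F\<in>K. card F = Suc m}"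
  proof (rule sum_multicount)
    show "finite (vertices K)" using sc unfolding simplicial_complex_def vertices_def by auto
    show "finite {F \<in> K. card F = Suc m}" using sc_finK[OF sc] by auto
    show "\<forall>F\<in>{F \<in> K. card F = Suc m}. card {v \<in> vertices K. v \<in> F} = Suc m"
    proof
      fix F assume "F \<in> {F \<in> K. card F = Suc m}"
      moreover hence "{v \<in> vertices K. v \<in> F} = F" unfolding vertices_def by auto
      ultimately show "card {v \<in> vertices K. v \<in> F} = Suc m" by simp
    qed
  qed
  finally show ?thesis by (simp add: gc_def)
qed

lemma gc_two_le: assumes sc: "simplicial_complex K" shows "gc K 2 \<le> card (vertices K) choose 2"
proof -
  have "{F\<in>K. card F = 2} \<subseteq> {B. B \<subseteq> vertices K \<and> card B = 2}" unfolding vertices_def by auto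
  moreover have "finite (vertices K)" using sc unfolding simplicial_complex_def vertices_def by auto
  moreover have "finite {B. B \<subseteq> vertices K \<and> card B = 2}"
    using \<open>finite (vertices K)\<close> by simp
  ultimately have "card {F\<in>K. card F = 2} \<le> card {B. B \<subseteq> vertices K \<and> card B = 2}"
    by (intro card_mono)
  thus ?thesis unfolding gc_def using n_subsets[OF \<open>finite (vertices K)\<close>] by simp
qed

lemma join_count:
  assumes fK: "finite K" and fL: "finite L" and fKF: "\<forall>F\<in>K. finite F" and fLF: "\<forall>F\<in>L. finite F"
    and dis: "\<Union>K \<inter> \<Union>L = {}"
  shows "gc (join K L) m = (\<Sum>i\<le>m. gc K i * gc L (m-i))"
proof -
  define P where "P = {(S,T). S\<in>K \<and> T\<in>L \<and> card S + card T = m}"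
  have cu: "card (S \<union> T) = card S + card T" if "S \<in> K" "T \<in> L" for S T
    using that fKF fLF dis by (intro card_Un_disjoint) auto
  have img: "{F\<in>join K L. card F = m} = (\<lambda>(S,T). S \<union> T) ` P"
    unfolding join_def P_def using cu by auto
  have inj: "inj_on (\<lambda>(S,T). S \<union> T) P"
  proof (rule inj_onI, clarify)
    fix S T S' T' assume a: "(S,T) \<in> P" "(S',T') \<in> P" "S \<union> T = S' \<union> T'"
    have "S = (S \<union> T) \<inter> \<Union>K" "S' = (S' \<union> T') \<inter> \<Union>K"
      "T = (S \<union> T) \<inter> \<Union>L" "T' = (S' \<union> T') \<inter> \<Union>L"
      using a(1,2) dis unfolding P_def by auto
    thus "S = S' \<and> T = T'" using a(3) by metis
  qed
  have Peq: "P = (\<Union>i\<in>{..m}. {S\<in>K. card S = i} \<times> {T\<in>L. card T = m-i})"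
    unfolding P_def by auto
  have "card P = (\<Sum>i\<le>m. card ({S\<in>K. card S = i} \<times> {T\<in>L. card T = m-i}))"
    unfolding Peq
    by (rule card_UN_disjoint) (use fK fL in auto)
  also have "\<dots> = (\<Sum>i\<le>m. gc K i * gc L (m-i))"
    by (simp add: gc_def card_cartesian_product)
  finally show ?thesis using img inj by (simp add: gc_def card_image)
qed




lemma sum_three:
  fixes f g :: "nat \<Rightarrow> nat"
  assumes "\<forall>t\<ge>3. g t = 0"
  shows "(\<Sum>j\<le>Suc (Suc i). f j * g (Suc (Suc i) - j)) = f (Suc (Suc i)) * g 0 + f (Suc i) * g 1 + f i * g 2"
proof -
  have "(\<Sum>j\<le>Suc (Suc i). f j * g (Suc (Suc i) - j)) = (\<Sum>j<Suc (Suc (Suc i)). f j * g (Suc (Suc i) - j))"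
    by (simp add: lessThan_Suc_atMost)
  also have "\<dots> = (\<Sum>j<i. f j * g (Suc (Suc i) - j)) + f i * g 2 + f (Suc i) * g 1 + f (Suc (Suc i)) * g 0"
    by (simp add: numeral_2_eq_2)
  also have "(\<Sum>j<i. f j * g (Suc (Suc i) - j)) = 0"
    using assms by (intro sum.neutral) auto
  finally show ?thesis by simp
qed

lemma cross_props: "finite (cross c) \<and> (\<forall>F\<in>cross c. finite F \<and> F \<subseteq> lessThan (2 * c))"
proof (induction c)
  case 0
  then show ?case by simp
next
  case (Suc c)
  have "cross (Suc c) = (\<lambda>(S,T). S \<union> T) ` (cross c \<times> zero_sphere (2 * c) (2 * c+1))"
    by (auto simp: join_def)
  hence "finite (cross (Suc c))" using Suc by (simp add: zero_sphere_def)
  moreover have "\<forall>F\<in>cross (Suc c). finite F \<and> F \<subseteq> lessThan (2 * Suc c)"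
    using Suc by (fastforce simp: join_def zero_sphere_def)
  ultimately show ?case by blast
qed

lemma gc_zs: "a \<noteq> b \<Longrightarrow> gc (zero_sphere a b) m = (if m = 0 then 1 else if m = 1 then 2 else 0)"
proof -
  assume ab: "a \<noteq> b"
  have e0: "{F \<in> zero_sphere a b. card F = 0} = {{}}" by (auto simp: zero_sphere_def)
  have e1: "{F \<in> zero_sphere a b. card F = 1} = {{a},{b}}" by (auto simp: zero_sphere_def)
  have c1: "\<forall>F\<in>zero_sphere a b. card F \<le> 1" by (simp add: zero_sphere_def)
  have e2: "{F \<in> zero_sphere a b. card F = m} = {}" if "m \<ge> 2" using c1 that by force
  show ?thesis
  proof (cases "m = 0")
    case True thus ?thesis unfolding gc_def using e0 by simp
  next
    case False
    show ?thesis
    proof (cases "m = 1")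
      case True thus ?thesis unfolding gc_def using e1 ab by simp
    next
      case False
      hence "m \<ge> 2" using \<open>m \<noteq> 0\<close> by linarith
      thus ?thesis unfolding gc_def e2[OF \<open>m \<ge> 2\<close>] using False \<open>m \<noteq> 0\<close> by simp
    qed
  qed
qed

lemma gc_cross: "gc (cross c) m = 2^m * (c choose m)"
proof (induction c arbitrary: m)
  case 0
  have e: "{F \<in> {{}}. card F = m} = (if m = 0 then {{}} else {})" by auto
  show ?case unfolding gc_def cross.simps e by simp
next
  case (Suc c)
  have lt: "\<forall>F\<in>cross c. \<forall>x\<in>F. x < 2 * c" using cross_props[of c] by blast
  have disj: "\<Union>(cross c) \<inter> \<Union>(zero_sphere (2 * c) (2 * c+1)) = {}"
    unfolding zero_sphere_def using lt by fastforce
  have j: "gc (cross (Suc c)) m = (\<Sum>i\<le>m. gc (cross c) i * gc (zero_sphere (2 * c) (2 * c+1)) (m-i))"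
    unfolding cross.simps
    by (rule join_count) (use cross_props[of c] disj in \<open>auto simp: zero_sphere_def\<close>)
  have g: "\<forall>t\<ge>3. gc (zero_sphere (2 * c) (2 * c+1)) t = 0" by (simp add: gc_zs)
  show ?case
  proof (cases m)
    case 0
    then show ?thesis using j Suc by (simp add: gc_zs)
  next
    case (Suc m')
    show ?thesis
    proof (cases m')
      case 0
      then show ?thesis using j Suc.IH \<open>m = Suc m'\<close> by (simp add: gc_zs)
    next
      case (Suc i)
      let ?z = "gc (zero_sphere (2 * c) (2 * c+1))"
      have "gc (cross (Suc c)) m = gc (cross c) (Suc (Suc i)) * ?z 0 + gc (cross c) (Suc i) * ?z 1
          + gc (cross c) i * ?z 2"
        using j unfolding \<open>m = Suc m'\<close> Suc by (simp only: sum_three[OF g])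
      also have "\<dots> = 2^(i+2) * (c choose (i+2)) + 2^(i+1) * (c choose (i+1)) * 2"
        by (simp add: gc_zs Suc.IH)
      also have "\<dots> = 2^m * (Suc c choose m)" using \<open>m = Suc m'\<close> Suc
        by (simp add: algebra_simps)
      finally show ?thesis .
    qed
  qed
qed




lemma smod: "i < L \<Longrightarrow> Suc i mod L = (if Suc i = L then 0 else Suc i)"
  by auto

lemma cyc_props: "L > 0 \<Longrightarrow> finite (cycle_cx a L) \<and> (\<forall>F\<in>cycle_cx a L. finite F \<and> (\<forall>x\<in>F. a \<le> x \<and> x < a + L))"
proof -
  assume L: "L > 0"
  have "cycle_cx a L = {{}} \<union> (\<lambda>i. {a+i}) ` {..<L} \<union> (\<lambda>i. {a+i, a + (Suc i mod L)}) ` {..<L}"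
    unfolding cycle_cx_def by auto
  moreover have "\<forall>F\<in>cycle_cx a L. finite F \<and> (\<forall>x\<in>F. a \<le> x \<and> x < a + L)"
    unfolding cycle_cx_def using L by auto
  ultimately show ?thesis by simp
qed

lemma gc_cyc:
  assumes L: "L \<ge> 3"
  shows "gc (cycle_cx a L) m = (if m = 0 then 1 else if m \<le> 2 then L else 0)"
proof -
  define V1 where "V1 = (\<lambda>i. {a+i}) ` {..<L}"
  define E where "E = (\<lambda>i. {a+i, a + (Suc i mod L)}) ` {..<L}"
  have cx: "cycle_cx a L = {{}} \<union> V1 \<union> E"
    unfolding cycle_cx_def V1_def E_def by auto
  have sne: "Suc i mod L \<noteq> i" if "i < L" for i
    using that L by (auto simp: smod)
  have cV: "\<forall>F\<in>V1. card F = 1" unfolding V1_def by auto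
  have cE: "\<forall>F\<in>E. card F = 2" unfolding E_def
  proof clarify
    fix i assume "i < L"
    hence "a + i \<noteq> a + (Suc i mod L)" using sne[of i] by auto
    thus "card {a + i, a + (Suc i mod L)} = 2" by simp
  qed
  have cardV: "card V1 = L" unfolding V1_def by (simp add: card_image inj_on_def)
  have inj: "inj_on (\<lambda>i. {a+i, a + (Suc i mod L)}) {..<L}"
  proof (rule inj_onI)
    fix i j assume i: "i \<in> {..<L}" and j: "j \<in> {..<L}"
      and eq: "{a+i, a + (Suc i mod L)} = {a+j, a + (Suc j mod L)}"
    show "i = j"
    proof (rule ccontr)
      assume ne: "i \<noteq> j"
      hence "a + i = a + (Suc j mod L) \<and> a + (Suc i mod L) = a + j" using eq
        unfolding doubleton_eq_iff by auto
      hence ij: "i = Suc j mod L" "j = Suc i mod L" by auto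
      have sj: "Suc j mod L = (if Suc j = L then 0 else Suc j)" using smod j by simp
      have si: "Suc i mod L = (if Suc i = L then 0 else Suc i)" using smod i by simp
      have A: "i = (if Suc j = L then 0 else Suc j)" using ij(1) sj by simp
      have B: "j = (if Suc i = L then 0 else Suc i)" using ij(2) si by simp
      have A1: "Suc j = L \<Longrightarrow> i = 0" "Suc j \<noteq> L \<Longrightarrow> i = Suc j" using A by auto
      have B1: "Suc i = L \<Longrightarrow> j = 0" "Suc i \<noteq> L \<Longrightarrow> j = Suc i" using B by auto
      show False
      proof (cases "Suc j = L")
        case True
        hence "i = 0" using A1 by blast
        hence "Suc i \<noteq> L" using L by simp
        hence "j = Suc i" using B1 by blast
        thus False using True \<open>i = 0\<close> L by simp
      next
        case False
        hence ij2: "i = Suc j" using A1 by blast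
        show False
        proof (cases "Suc i = L")
          case True
          hence "j = 0" using B1 by blast
          thus False using True ij2 L by simp
        next
          case False
          hence "j = Suc i" using B1 by blast
          thus False using ij2 by simp
        qed
      qed
    qed
  qed
  have cardE: "card E = L" unfolding E_def using inj by (simp add: card_image)
  have spl: "{F\<in>cycle_cx a L. card F = m} = {F\<in>{{}}. card F = m} \<union> {F\<in>V1. card F = m} \<union> {F\<in>E. card F = m}"
    unfolding cx by blast
  have f0: "{F\<in>{{}}. card F = m} = (if m = 0 then {{}} else {})" by auto
  have fV: "{F\<in>V1. card F = m} = (if m = 1 then V1 else {})" using cV by auto
  have fE: "{F\<in>E. card F = m} = (if m = 2 then E else {})" using cE by auto
  have "m = 0 \<or> m = 1 \<or> m = 2 \<or> m \<ge> 3" by linarith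
  moreover have ?thesis if "m = 0" unfolding gc_def spl f0 fV fE using that by simp
  moreover have ?thesis if "m = 1" unfolding gc_def spl f0 fV fE using that cardV by simp
  moreover have ?thesis if "m = 2" unfolding gc_def spl f0 fV fE using that cardE by simp
  moreover have ?thesis if "m \<ge> 3" unfolding gc_def spl f0 fV fE using that by simp
  ultimately show ?thesis by blast
qed

definition Fm :: "nat \<Rightarrow> nat \<Rightarrow> nat \<Rightarrow> nat" where
  "Fm c i L = 2^(i+2) * (c choose (i+2)) + L * (2^(i+1) * (c choose (i+1)) + 2^i * (c choose i))"

lemma S1_small: "n \<le> 2*d+2 \<Longrightarrow> S1 d n = cross (d+1)"
  by (simp add: S1_def)

lemma S1_big:
  assumes n: "n > 2*d+2"
  shows "gc (S1 d n) m = (\<Sum>j\<le>m. gc (cross (d-1)) j * gc (cycle_cx (2*(d-1)) (n - 2*(d-1))) (m-j))"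
proof -
  let ?c = "d-1" and ?L = "n - 2*(d-1)"
  have L: "?L > 0" using n by simp
  have S: "S1 d n = join (cross ?c) (cycle_cx (2*?c) ?L)" using n by (simp add: S1_def)
  have lt: "\<forall>F\<in>cross ?c. \<forall>x\<in>F. x < 2 * ?c" using cross_props[of ?c] by blast
  have ge: "\<forall>F\<in>cycle_cx (2*?c) ?L. \<forall>x\<in>F. 2 * ?c \<le> x" using cyc_props[OF L] by blast
  have disj: "\<Union>(cross ?c) \<inter> \<Union>(cycle_cx (2*?c) ?L) = {}"
  proof -
    { fix x assume "x \<in> \<Union>(cross ?c)" "x \<in> \<Union>(cycle_cx (2*?c) ?L)"
      hence False using lt ge by (meson UnionE not_le) }
    thus ?thesis by blast
  qed
  have f1: "finite (cross ?c)" "\<forall>F\<in>cross ?c. finite F" using cross_props[of ?c] by blast+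
  have f2: "finite (cycle_cx (2*?c) ?L)" "\<forall>F\<in>cycle_cx (2*?c) ?L. finite F" using cyc_props[OF L] by blast+
  show ?thesis unfolding S
    by (rule join_count[OF f1(1) f2(1) f1(2) f2(2) disj])
qed

lemma gcS1_one: "d \<ge> 1 \<or> n \<ge> 2 \<Longrightarrow> gc (S1 d n) 1 = (if n \<le> 2*d+2 then 2*d+2 else n)"
proof (cases "n \<le> 2*d+2")
  case True
  have "gc (S1 d n) 1 = 2^1 * ((d+1) choose 1)" unfolding S1_small[OF True] by (rule gc_cross)
  thus ?thesis using True by simp
next
  case False
  let ?L = "n - 2*(d-1)"
  have L3: "?L \<ge> 3" using False by simp
  have "gc (S1 d n) 1 = gc (cross (d-1)) 1 * gc (cycle_cx (2*(d-1)) ?L) 0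
       + gc (cross (d-1)) 0 * gc (cycle_cx (2*(d-1)) ?L) 1"
    using S1_big[of d n 1] False by simp
  also have "\<dots> = 2 * (d-1) + ?L"
  proof -
    have "gc (cycle_cx (2*(d-1)) ?L) 0 = 1" "gc (cycle_cx (2*(d-1)) ?L) 1 = ?L"
      by (subst gc_cyc[OF L3], simp)+
    thus ?thesis by (simp add: gc_cross)
  qed
  also have "\<dots> = n" using False by simp
  finally show ?thesis using False by simp
qed

lemma gcS1_big2:
  assumes n: "n > 2*d+2"
  shows "gc (S1 d n) (Suc (Suc i)) = Fm (d-1) i (n - 2*(d-1))"
proof -
  let ?L = "n - 2*(d-1)"
  have L3: "?L \<ge> 3" using n by simp
  have g: "\<forall>t\<ge>3. gc (cycle_cx (2*(d-1)) ?L) t = 0"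
    by (intro allI impI, subst gc_cyc[OF L3], simp)
  have "gc (S1 d n) (Suc (Suc i)) = gc (cross (d-1)) (Suc (Suc i)) * gc (cycle_cx (2*(d-1)) ?L) 0
     + gc (cross (d-1)) (Suc i) * gc (cycle_cx (2*(d-1)) ?L) 1
     + gc (cross (d-1)) i * gc (cycle_cx (2*(d-1)) ?L) 2"
    unfolding S1_big[OF n] by (rule sum_three[OF g])
  also have "\<dots> = Fm (d-1) i ?L"
  proof -
    have "gc (cycle_cx (2*(d-1)) ?L) 0 = 1" "gc (cycle_cx (2*(d-1)) ?L) 1 = ?L"
      "gc (cycle_cx (2*(d-1)) ?L) 2 = ?L"
      by (subst gc_cyc[OF L3], simp)+
    thus ?thesis by (simp add: gc_cross Fm_def algebra_simps)
  qed
  finally show ?thesis .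
qed

lemma cross_Fm: "2^(i+2) * ((c+2) choose (i+2)) = Fm c i 4"
proof -
  have "((c+2) choose (i+2)) = (c choose (i+2)) + 2 * (c choose (i+1)) + (c choose i)"
    by (simp add: numeral_2_eq_2)
  thus ?thesis by (simp add: Fm_def algebra_simps)
qed

lemma gcS1_lin:
  assumes d: "d \<ge> 1" and n: "n \<ge> 2*d+2"
  shows "gc (S1 d n) (Suc (Suc i)) = Fm (d-1) i (n - 2*(d-1))"
proof (cases "n = 2*d+2")
  case True
  have e: "d + 1 = (d-1)+2" "Suc (Suc i) = i+2" using d by auto
  have "gc (S1 d n) (Suc (Suc i)) = 2^(i+2) * (((d-1)+2) choose (i+2))"
  proof -
    have nle: "n \<le> 2*d+2" using True by simp
    show ?thesis unfolding S1_small[OF nle] e gc_cross by simp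
  qed
  also have "\<dots> = Fm (d-1) i 4" by (rule cross_Fm)
  also have "4 = n - 2*(d-1)" using True d by arith
  finally show ?thesis .
next
  case False
  thus ?thesis using gcS1_big2 n by simp
qed

lemma gcS1_zero:
  assumes d: "d \<le> 1"
  shows "gc (S1 d n) (Suc (Suc (Suc i))) = 0"
proof (cases "n \<le> 2*d+2")
  case True
  have "gc (S1 d n) (Suc (Suc (Suc i))) = 2^(Suc (Suc (Suc i))) * ((d+1) choose (Suc (Suc (Suc i))))"
    unfolding S1_small[OF True] by (rule gc_cross)
  thus ?thesis using d by (simp add: binomial_eq_0)
next
  case False
  thus ?thesis using d gcS1_big2[of d n "Suc i"] by (simp add: Fm_def binomial_eq_0)
qed




lemma binom_rel: "Suc k * (p choose Suc k) + k * (p choose k) = p * (p choose k)"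
proof (cases "k \<le> p")
  case True
  have "Suc k * (p choose Suc k) = p * ((p - 1) choose k)" by (rule binomial_absorption)
  also have "\<dots> = (p - k) * (p choose k)" by (rule binomial_absorb_comp[symmetric])
  finally show ?thesis using True by (simp add: algebra_simps diff_mult_distrib)
next
  case False
  thus ?thesis by (simp add: binomial_eq_0)
qed

lemma binom_rel_int: "(int k + 1) * int (p choose Suc k) + int k * int (p choose k) = int p * int (p choose k)"
proof -
  have "int (Suc k * (p choose Suc k) + k * (p choose k)) = int (p * (p choose k))"
    using binom_rel by presburger
  thus ?thesis by (simp add: algebra_simps)
qed

lemma ident_int:
  fixes x b0 b1 b2 b3 c2 p i n :: int
  assumes R0: "(i+1)*b1 + i*b0 = p*b0" and R1: "(i+2)*b2 + (i+1)*b1 = p*b1"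
    and R2: "(i+3)*b3 + (i+2)*b2 = p*b2" and C2: "2 * c2 = p*p - p"
  shows "n * (4*x*b2 - 2*p*(2*x*b1 + x*b0)) + 2*(2*x*b1 + x*b0) * (4*(p + c2) + (n - 2*p - 2)*(2*(p+1)+1))
    = (i+3) * (8*x*(b3+b2) + (n - 2*p - 2)*(4*x*(b2+b1) + 2*x*(b1+b0)))"
  using assms by Groebner_Basis.algebra

lemma two_choose: "2 * (m choose 2) = m * (m - 1)"
proof -
  have "even (m * (m - 1))" by (cases "even m") simp_all
  thus ?thesis using choose_two[of m] by simp
qed

lemma ident_Fm:
  fixes p i n :: nat
  assumes n: "n \<ge> 2*p+4"
  shows "int n * (int (2^(i+2)*(p choose (i+2))) - 2*int p*int (2^(i+1)*(p choose (i+1)) + 2^i*(p choose i)))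
     + 2*int (2^(i+1)*(p choose (i+1)) + 2^i*(p choose i)) * int (Fm (p+1) 0 (n - 2*(p+1)))
     = int (i+3) * int (Fm (p+1) (Suc i) (n - 2*(p+1)))"
proof -
  define x :: int where "x = 2^i"
  define b0 :: int where "b0 = int (p choose i)"
  define b1 :: int where "b1 = int (p choose Suc i)"
  define b2 :: int where "b2 = int (p choose Suc (Suc i))"
  define b3 :: int where "b3 = int (p choose Suc (Suc (Suc i)))"
  define c2 :: int where "c2 = int (p choose 2)"
  have R0: "(int i+1)*b1 + int i*b0 = int p*b0" unfolding b0_def b1_def by (rule binom_rel_int)
  have R1: "(int i+2)*b2 + (int i+1)*b1 = int p*b1" unfolding b2_def b1_def
    using binom_rel_int[of "Suc i" p] by (simp add: add.commute)
  have R2: "(int i+3)*b3 + (int i+2)*b2 = int p*b2" unfolding b2_def b3_def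
    using binom_rel_int[of "Suc (Suc i)" p] by (simp add: add.commute)
  have C2: "2 * c2 = int p * int p - int p"
  proof -
    have "int (2 * (p choose 2)) = int (p * (p - 1))" using two_choose by presburger
    thus ?thesis unfolding c2_def by (cases p) (simp_all add: algebra_simps)
  qed
  define Lc where "Lc = n - 2*(p+1)"
  have LI: "int Lc = int n - 2*int p - 2" using n unfolding Lc_def by simp
  have F0: "int (Fm (p+1) 0 Lc) = 4*(int p + c2) + int Lc*(2*(int p+1)+1)"
  proof -
    have "Suc p choose 2 = p + (p choose 2)" by (simp add: numeral_2_eq_2)
    thus ?thesis unfolding Fm_def c2_def by (simp add: algebra_simps numeral_2_eq_2)
  qed
  have F1: "int (Fm (p+1) (Suc i) Lc) =
      8*x*(b3+b2) + int Lc*(4*x*(b2+b1) + 2*x*(b1+b0))"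
    unfolding Fm_def x_def b0_def b1_def b2_def b3_def
    by (simp add: numeral_3_eq_3 numeral_2_eq_2 algebra_simps)
  have A: "int (2^(i+2)*(p choose (i+2))) = 4*x*b2" unfolding x_def b2_def
    by (simp add: numeral_2_eq_2 power_add)
  have B: "int (2^(i+1)*(p choose (i+1)) + 2^i*(p choose i)) = 2*x*b1 + x*b0"
    unfolding x_def b0_def b1_def by simp
  show ?thesis unfolding Lc_def[symmetric] A B F0 F1 LI
    using ident_int[OF R0 R1 R2 C2, of "int n" x] by simp
qed

lemma HS_sc: "K \<in> HS i d n \<Longrightarrow> simplicial_complex K \<and> card (vertices K) = n"
  by (simp add: HS_def homology_sphere_def)

lemma hyp_vertices:
  assumes H: "\<forall>d n. \<forall>K\<in>HS 1 d n. fvec K 1 \<ge> fvec (S1 d n) 1"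
    and K: "K \<in> HS 1 d n" and d: "d \<ge> 1"
  shows "n \<ge> 2*d+2"
proof (rule ccontr)
  assume "\<not> n \<ge> 2*d+2"
  hence nle: "n \<le> 2*d+1" by simp
  have sc: "simplicial_complex K" and cv: "card (vertices K) = n" using HS_sc[OF K] by auto
  have "fvec (S1 d n) 1 \<le> fvec K 1" using H K by blast
  hence h: "gc (S1 d n) 2 \<le> gc K 2" by (simp add: fvec_gc numeral_2_eq_2)
  have nle2: "n \<le> 2*d+2" using nle by simp
  have "gc (S1 d n) 2 = 2^2 * ((d+1) choose 2)"
    unfolding S1_small[OF nle2] by (rule gc_cross)
  moreover have "gc K 2 \<le> n choose 2" using gc_two_le[OF sc] cv by simp
  ultimately have "4 * ((d+1) choose 2) \<le> n choose 2" using h by simp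
  hence "2 * (4 * ((d+1) choose 2)) \<le> 2 * (n choose 2)" by simp
  hence "4 * (2 * ((d+1) choose 2)) \<le> 2 * (n choose 2)" by simp
  hence "4 * ((d+1) * d) \<le> n * (n - 1)" unfolding two_choose by simp
  moreover have "n * (n - 1) \<le> (2*d+1) * (2*d)" using nle by (intro mult_le_mono) auto
  ultimately have "4 * ((d+1) * d) \<le> (2*d+1) * (2*d)" by linarith
  hence "4*d*d + 4*d \<le> 4*d*d + 2*d" by (simp add: algebra_simps)
  thus False using d by simp
qed

lemma d0_vertices:
  assumes K: "K \<in> HS 1 0 n" shows "n \<ge> 2"
proof (rule ccontr)
  assume nn: "\<not> n \<ge> 2"
  have sc: "simplicial_complex K" and cv: "card (vertices K) = n" using HS_sc[OF K] by auto
  have hd: "has_dim K 0"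
    and hom: "\<forall>F\<in>K. \<forall>j::nat. homology_like_sphere (red_homology (link F K) j) j (int 0 - int (card F))"
    using K unfolding HS_def homology_sphere_def by auto
  obtain F where F: "F \<in> K" "card F = 1" using hd unfolding has_dim_def by auto
  then obtain v where Fv: "F = {v}" by (auto simp: card_1_singleton_iff)
  have vV: "v \<in> vertices K" using F Fv by (auto simp: vertices_def)
  have fin: "finite (vertices K)" using sc unfolding simplicial_complex_def vertices_def by auto
  have "card (vertices K) > 0" using vV fin card_gt_0_iff by blast
  hence "card (vertices K) = 1" using nn cv by simp
  then obtain w where "vertices K = {w}" by (auto simp: card_1_singleton_iff)
  hence Vv: "vertices K = {v}" using vV by simp
  have sub: "\<forall>G\<in>K. G \<subseteq> {v}" using Vv unfolding vertices_def by blast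
  have vK: "{v} \<in> K" using F Fv by simp
  have lk: "link {} K = K" by (auto simp: link_def)
  have "homology_like_sphere (red_homology (link {} K) 0) 0 (int 0 - int (card ({}::nat set)))"
    using hom sc_empty[OF sc] by blast
  hence iso: "red_homology K 0 \<cong> integer_group" by (simp add: homology_like_sphere_def lk)
  have "chains K (0+1) \<inter> cycles K (0+1) \<subseteq> {\<lambda>G. 0}"
  proof
    fix c assume c: "c \<in> chains K (0+1) \<inter> cycles K (0+1)"
    hence ch: "\<forall>G. c G \<noteq> 0 \<longrightarrow> G \<in> K \<and> card G = 1" and bd0: "bd K c = (\<lambda>G. 0)"
      by (auto simp: chains_def cycles_def)
    have S: "{w. w \<notin> {} \<and> insert w {} \<in> K} = {v}" using vK sub by auto
    have "bd K c {} = (\<Sum>w\<in>{w. w \<notin> {} \<and> insert w {} \<in> K}. (-1) ^ card {u\<in>{}. u < w} * c (insert w {}))"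
      unfolding bd_def by (rule refl)
    also have "\<dots> = c {v}" unfolding S by simp
    finally have cv0: "c {v} = 0" using bd0 by (metis)
    have "c G = 0" for G
    proof (rule ccontr)
      assume cG: "c G \<noteq> 0"
      hence "G \<in> K" "card G = 1" using ch by auto
      hence "G = {v}" using sub by (metis card_1_singleton_iff subset_singletonD one_neq_zero card.empty)
      thus False using cv0 cG by simp
    qed
    thus "c \<in> {\<lambda>G. 0}" by auto
  qed
  thus False using red_hom_not_iso[of K 0] iso by blast
qed

lemma main:
  assumes H: "\<forall>d n. \<forall>K\<in>HS 1 d n. fvec K 1 \<ge> fvec (S1 d n) 1"
  shows "\<forall>d n. \<forall>K\<in>HS 1 d n. gc (S1 d n) (Suc j) \<le> gc K (Suc j)"
proof (induction j rule: less_induct)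
  case (less j)
  show ?case
  proof (intro allI ballI)
    fix d n K assume K: "K \<in> HS 1 d n"
    have sc: "simplicial_complex K" and cv: "card (vertices K) = n" using HS_sc[OF K] by auto
    show "gc (S1 d n) (Suc j) \<le> gc K (Suc j)"
    proof (cases j)
      case 0
      have gK: "gc K 1 = n" using gc_one[OF sc] cv by simp
      show ?thesis
      proof (cases "d = 0")
        case True
        have n2: "n \<ge> 2" using d0_vertices K True by blast
        have "gc (S1 d n) 1 = (if n \<le> 2*d+2 then 2*d+2 else n)" using n2 by (intro gcS1_one) simp
        thus ?thesis using 0 gK n2 True by simp
      next
        case False
        hence nd: "n \<ge> 2*d+2" using hyp_vertices[OF H K] by simp
        have "gc (S1 d n) 1 = (if n \<le> 2*d+2 then 2*d+2 else n)" using False by (intro gcS1_one) simp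
        thus ?thesis using 0 gK nd by simp
      qed
    next
      case (Suc j')
      show ?thesis
      proof (cases j')
        case 0
        have "fvec (S1 d n) 1 \<le> fvec K 1" using H K by blast
        thus ?thesis using Suc 0 by (simp add: fvec_gc)
      next
        case (Suc i)
        hence j: "j = Suc (Suc i)" using \<open>j = Suc j'\<close> by simp
        show ?thesis
        proof (cases "d \<le> 1")
          case True thus ?thesis using gcS1_zero j by simp
        next
          case False
          define p where "p = d - 2"
          have dp: "d = p + 2" using False unfolding p_def by simp
          have n: "n \<ge> 2*d+2" using hyp_vertices[OF H K] False by simp
          define V where "V = vertices K"
          define nv where "nv v = card (vertices (link {v} K))" for v
          have finV: "finite V" using sc unfolding V_def simplicial_complex_def vertices_def by auto
          have cV: "card V = n" using cv V_def by simp
          have LH: "link {v} K \<in> HS 1 (p+1) (nv v)" if "v \<in> V" for v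
            using link_HS[OF K _ ] that False unfolding V_def nv_def dp by force
          have nvb: "nv v \<ge> 2*p+4" if "v \<in> V" for v
            using hyp_vertices[OF H LH[OF that]] by simp
          have IH: "gc (S1 (p+1) (nv v)) (Suc (Suc i)) \<le> gc (link {v} K) (Suc (Suc i))" if "v \<in> V" for v
            using less.IH[of "Suc i"] j LH[OF that] by blast
          have lin: "gc (S1 (p+1) (nv v)) (Suc (Suc i)) = Fm p i (nv v - 2*p)" if "v \<in> V" for v
            using gcS1_lin[of "p+1" "nv v" i] nvb[OF that] by simp
          have dc3: "(\<Sum>v\<in>V. gc (link {v} K) (Suc (Suc i))) = Suc (Suc (Suc i)) * gc K (Suc (Suc (Suc i)))"
            using double_count[OF sc] unfolding V_def by blast
          have dc1: "(\<Sum>v\<in>V. nv v) = 2 * gc K 2"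
          proof -
            have "(\<Sum>v\<in>V. gc (link {v} K) 1) = Suc 1 * gc K (Suc 1)"
              using double_count[OF sc] unfolding V_def by blast
            moreover have "gc (link {v} K) 1 = nv v" if "v \<in> V" for v
              using gc_one HS_sc[OF LH[OF that]] unfolding nv_def by blast
            ultimately show ?thesis by (simp add: numeral_2_eq_2)
          qed
          have "fvec (S1 d n) 1 \<le> fvec K 1" using H K by blast
          hence hyp2: "Fm (p+1) 0 (n - 2*(p+1)) \<le> gc K 2"
            using gcS1_lin[of d n 0] n dp by (simp add: fvec_gc numeral_2_eq_2)
          define A where "A = 2^(i+2)*(p choose (i+2))"
          define B where "B = 2^(i+1)*(p choose (i+1)) + 2^i*(p choose i)"
          have Fv: "int (Fm p i (nv v - 2*p)) = int A - 2*int p*int B + int B * int (nv v)" if "v \<in> V" for v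
          proof -
            have e1: "int (nv v - 2*p) = int (nv v) - 2 * int p" using nvb[OF that] by simp
            have "Fm p i (nv v - 2*p) = A + (nv v - 2*p) * B" unfolding Fm_def A_def B_def by (rule refl)
            hence "int (Fm p i (nv v - 2*p)) = int A + int (nv v - 2*p) * int B"
              by (simp only: of_nat_add of_nat_mult)
            thus ?thesis unfolding e1 by (simp add: algebra_simps)
          qed
          have "int (i+3) * int (Fm (p+1) (Suc i) (n - 2*(p+1)))
              = int n * (int A - 2*int p*int B) + 2 * int B * int (Fm (p+1) 0 (n - 2*(p+1)))"
            unfolding A_def B_def by (rule ident_Fm[symmetric]) (use n dp in simp)
          also have "\<dots> \<le> int n * (int A - 2*int p*int B) + 2 * int B * int (gc K 2)"
            using hyp2 by (simp add: mult_left_mono)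
          also have "\<dots> = int n * (int A - 2*int p*int B) + int B * int (\<Sum>v\<in>V. nv v)"
            unfolding dc1 by simp
          also have "\<dots> = (\<Sum>v\<in>V. int A - 2*int p*int B + int B * int (nv v))"
            by (simp add: sum.distrib sum_distrib_left cV)
          also have "\<dots> = (\<Sum>v\<in>V. int (Fm p i (nv v - 2*p)))"
            using Fv by (intro sum.cong[OF refl]) simp
          also have "\<dots> \<le> (\<Sum>v\<in>V. int (gc (link {v} K) (Suc (Suc i))))"
            using IH lin by (intro sum_mono) (metis of_nat_le_iff)
          also have "\<dots> = int (Suc (Suc (Suc i)) * gc K (Suc (Suc (Suc i))))"
            using dc3 by (metis of_nat_sum)
          finally have "int (i+3) * int (Fm (p+1) (Suc i) (n - 2*(p+1))) \<le> int (Suc (Suc (Suc i)) * gc K (Suc (Suc (Suc i))))" by simp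
          hence "int ((i+3) * Fm (p+1) (Suc i) (n - 2*(p+1))) \<le> int ((i+3) * gc K (Suc (Suc (Suc i))))"
            by (simp only: of_nat_mult) (simp add: add.commute)
          hence "(i+3) * Fm (p+1) (Suc i) (n - 2*(p+1)) \<le> (i+3) * gc K (Suc (Suc (Suc i)))"
            by (simp only: of_nat_le_iff)
          hence "Fm (p+1) (Suc i) (n - 2*(p+1)) \<le> gc K (Suc (Suc (Suc i)))"
            using mult_le_cancel1[of "i+3"] by simp
          moreover have "gc (S1 d n) (Suc (Suc (Suc i))) = Fm (p+1) (Suc i) (n - 2*(p+1))"
            using gcS1_lin[of d n "Suc i"] n dp by simp
          ultimately show ?thesis using j by simp
        qed
      qed
    qed
  qed
qed

theorem proposition3p2:
  assumes "\<forall>d n. \<forall>K\<in>HS 1 d n. fvec K 1 \<ge> fvec (S1 d n) 1"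
  shows "\<forall>d n k. \<forall>K\<in>HS 1 d n. fvec K k \<ge> fvec (S1 d n) k"
  using main[OF assms] by (simp add: fvec_gc)


end
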